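(* Let $X$ be a separable AM-space such that every positive linear functional on $X$ attains its norm (i.e. for each positive $f\in X^*$ there is $x\in X$ with $\|x\|=1$ and $f(x)=\|f\|$). Then $X$ is lattice isometric to $C(K)$ for some compact Hausdorff space $K$.
   Context: An AM-space is a Banach lattice whose norm satisfies $\|x\vee y\|=\max(\|x\|,\|y\|)$ for all $x,y\ge0$. *)

theory Defs
  imports "HOL-Analysis.Analysis"
begin

definition lmod :: "'a::{lattice,uminus} \<Rightarrow> 'a" where
  "lmod x = sup x (- x)"

definition banach_lattice :: "'a::{banach,ordered_real_vector,lattice} itself \<Rightarrow> bool" where
  "banach_lattice _ \<longleftrightarrow> (\<forall>x y::'a. lmod x \<le> lmod y \<longrightarrow> norm x \<le> norm y)"

definition AM_space :: "'a::{banach,ordered_real_vector,lattice} itself \<Rightarrow> bool" where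
  "AM_space T \<longleftrightarrow> banach_lattice T \<and>
     (\<forall>x y::'a. 0 \<le> x \<and> 0 \<le> y \<longrightarrow> norm (sup x y) = max (norm x) (norm y))"

definition separable_type :: "'a::metric_space itself \<Rightarrow> bool" where
  "separable_type _ \<longleftrightarrow> (\<exists>D::'a set. countable D \<and> closure D = UNIV)"

definition positive_dual :: "('a::{real_normed_vector,ord} \<Rightarrow> real) \<Rightarrow> bool" where
  "positive_dual f \<longleftrightarrow> bounded_linear f \<and> (\<forall>x. 0 \<le> x \<longrightarrow> 0 \<le> f x)"

definition attains_norm :: "('a::real_normed_vector \<Rightarrow> real) \<Rightarrow> bool" where
  "attains_norm f \<longleftrightarrow> (\<exists>x. norm x = 1 \<and> f x = onorm f)"

text \<open>C(K) for a topological space K (given as an abstract topology):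
continuous real functions on topspace K, made extensional (0 off topspace K),
with the supremum norm.\<close>

definition CK :: "'b topology \<Rightarrow> ('b \<Rightarrow> real) set" where
  "CK K = {g. continuous_map K euclideanreal g \<and> (\<forall>t. t \<notin> topspace K \<longrightarrow> g t = 0)}"

definition CK_norm :: "'b topology \<Rightarrow> ('b \<Rightarrow> real) \<Rightarrow> real" where
  "CK_norm K g = (if topspace K = {} then 0 else (SUP t\<in>topspace K. \<bar>g t\<bar>))"

definition lattice_isometry_onto_CK :: "('a::{real_normed_vector,lattice} \<Rightarrow> 'b \<Rightarrow> real) \<Rightarrow> 'b topology \<Rightarrow> bool" where
  "lattice_isometry_onto_CK \<Phi> K \<longleftrightarrow>
     bij_betw \<Phi> UNIV (CK K) \<and>
     (\<forall>x y t. \<Phi> (x + y) t = \<Phi> x t + \<Phi> y t) \<and>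
     (\<forall>c x t. \<Phi> (c *\<^sub>R x) t = c * \<Phi> x t) \<and>
     (\<forall>x y t. \<Phi> (sup x y) t = max (\<Phi> x t) (\<Phi> y t)) \<and>
     (\<forall>x y t. \<Phi> (inf x y) t = min (\<Phi> x t) (\<Phi> y t)) \<and>
     (\<forall>x. CK_norm K (\<Phi> x) = norm x)"

end

theory Submission
  imports Defs
begin



lemma sup_add_left: "(c::'a::{ordered_real_vector,lattice}) + sup a b = sup (c+a) (c+b)"
proof (rule order.antisym)
  show "c + sup a b \<le> sup (c+a) (c+b)"
    by (metis add.commute le_diff_eq sup.bounded_iff sup_ge1 sup_ge2)
qed simp
lemma inf_add_left: "(c::'a::{ordered_real_vector,lattice}) + inf a b = inf (c+a) (c+b)"
proof (rule order.antisym)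
  show "inf (c+a) (c+b) \<le> c + inf a b"
    by (metis add.commute diff_le_eq inf_greatest inf_le1 inf_le2)
qed simp
lemma sup_add_right: "sup a b + (c::'a::{ordered_real_vector,lattice}) = sup (a+c) (b+c)"
  by (metis add.commute sup_add_left)
lemma inf_add_right: "inf a b + (c::'a::{ordered_real_vector,lattice}) = inf (a+c) (b+c)"
  by (metis add.commute inf_add_left)
lemma neg_sup: "- sup a (b::'a::{ordered_real_vector,lattice}) = inf (-a) (-b)"
proof (rule antisym)
  show "- sup a b \<le> inf (-a) (-b)" by simp
  have "inf (-a) (-b) \<le> -a" "inf (-a) (-b) \<le> -b" by auto
  then have "a \<le> - inf (-a) (-b)" "b \<le> - inf (-a) (-b)" by (simp_all add: le_minus_iff)
  then have "sup a b \<le> - inf (-a) (-b)" by simp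
  then show "inf (-a) (-b) \<le> - sup a b" by (simp add: le_minus_iff)
qed
lemma neg_inf: "- inf a (b::'a::{ordered_real_vector,lattice}) = sup (-a) (-b)"
  by (metis minus_minus neg_sup)
lemma add_inf_sup: "a + (b::'a::{ordered_real_vector,lattice}) = sup a b + inf a b"
proof -
  have "sup a b + inf a b = sup a b + (a + b + inf (-b) (-a))"
    by (simp add: inf_add_left)
  also have "inf (-b) (-a) = - sup a b" by (simp add: neg_sup inf_commute)
  finally show ?thesis by (simp add: algebra_simps)
qed

lemma le_lmod: "x \<le> lmod (x::'a::{ordered_real_vector,lattice})" "-x \<le> lmod x"
  by (auto simp: lmod_def)

lemma lmod_nonneg: "0 \<le> lmod (x::'a::{ordered_real_vector,lattice})"
proof -
  have "x + (-x) \<le> lmod x + lmod x" using le_lmod[of x] by (rule add_mono)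
  then have "0 \<le> lmod x + lmod x" by simp
  then have "0 \<le> (1/2::real) *\<^sub>R (lmod x + lmod x)" by (intro scaleR_nonneg_nonneg) auto
  also have "(1/2::real) *\<^sub>R (lmod x + lmod x) = lmod x"
    by (simp add: scaleR_2[symmetric])
  finally show ?thesis .
qed

lemma lmod_pos: "0 \<le> x \<Longrightarrow> lmod (x::'a::{ordered_real_vector,lattice}) = x"
  unfolding lmod_def by (rule sup_absorb1) (meson neg_le_0_iff_le order_trans)

lemma lmod_minus: "lmod (- x) = lmod (x::'a::{ordered_real_vector,lattice})"
  by (simp add: lmod_def sup_commute)

lemma lmod_lmod: "lmod (lmod x) = lmod (x::'a::{ordered_real_vector,lattice})"
  by (simp add: lmod_nonneg lmod_pos)

lemma pos_le_lmod: "sup x 0 \<le> lmod (x::'a::{ordered_real_vector,lattice})"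
  using le_lmod lmod_nonneg by (metis le_sup_iff)

lemma negp_le_lmod: "sup (-x) 0 \<le> lmod (x::'a::{ordered_real_vector,lattice})"
  using le_lmod lmod_nonneg by (metis le_sup_iff)

lemma lmod_triangle: "lmod (x+y) \<le> lmod x + lmod (y::'a::{ordered_real_vector,lattice})"
proof -
  have "x + y \<le> lmod x + lmod y" by (intro add_mono le_lmod)
  moreover have "-(x + y) \<le> lmod x + lmod y"
    using add_mono[OF le_lmod(2)[of x] le_lmod(2)[of y]] by (simp add: add.commute)
  ultimately show ?thesis by (simp add: lmod_def)
qed

lemma pos_add_le: "sup (u+v) 0 \<le> sup u 0 + sup (v::'a::{ordered_real_vector,lattice}) 0"
proof -
  have "u + v \<le> sup u 0 + sup v 0" by (intro add_mono) auto
  moreover have "0 \<le> sup u 0 + sup v 0" by (intro add_nonneg_nonneg) auto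
  ultimately show ?thesis by simp
qed

lemma sup_le_add_pos: "0 \<le> a \<Longrightarrow> 0 \<le> b \<Longrightarrow> sup a b \<le> a + (b::'a::{ordered_real_vector,lattice})"
  by (simp add: add_increasing add_increasing2)

lemma negpart_eq: "sup (-z) 0 = sup z 0 - (z::'a::{ordered_real_vector,lattice})"
proof -
  have "sup z 0 + (-z) = sup (z + -z) (0 + -z)" by (rule sup_add_right)
  then show ?thesis by (simp add: sup_commute)
qed

lemma inf_pos_neg: "inf (sup z 0) (sup (-z) 0) = (0::'a::{ordered_real_vector,lattice})"
proof -
  have "inf (sup z 0) (sup (-z) 0) = inf (sup z 0 + 0) (sup z 0 + (-z))"
    by (simp add: negpart_eq)
  also have "\<dots> = sup z 0 + inf 0 (-z)" by (simp add: inf_add_left)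
  also have "inf 0 (-z) = - sup 0 z" by (simp add: neg_sup)
  finally show ?thesis by (simp add: sup_commute)
qed

lemma scale_sup: "0 \<le> c \<Longrightarrow> c *\<^sub>R sup a b = sup (c *\<^sub>R a) (c *\<^sub>R (b::'a::{ordered_real_vector,lattice}))"
proof (cases "c = 0")
  case False
  assume c: "0 \<le> c"
  with False have cp: "0 < c" by simp
  show ?thesis
  proof (rule antisym)
    let ?S = "sup (c *\<^sub>R a) (c *\<^sub>R b)"
    have "a \<le> inverse c *\<^sub>R ?S"
      using scaleR_left_mono[OF sup_ge1[of "c *\<^sub>R a" "c *\<^sub>R b"], of "inverse c"] cp by simp
    moreover have "b \<le> inverse c *\<^sub>R ?S"
      using scaleR_left_mono[OF sup_ge2[of "c *\<^sub>R b" "c *\<^sub>R a"], of "inverse c"] cp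
      by (simp add: sup_commute)
    ultimately have "sup a b \<le> inverse c *\<^sub>R ?S" by simp
    from scaleR_left_mono[OF this c] cp show "c *\<^sub>R sup a b \<le> ?S" by simp
    show "?S \<le> c *\<^sub>R sup a b"
      by (simp add: c scaleR_left_mono)
  qed
qed simp

lemma scale_inf: "0 \<le> c \<Longrightarrow> c *\<^sub>R inf a b = inf (c *\<^sub>R a) (c *\<^sub>R (b::'a::{ordered_real_vector,lattice}))"
proof -
  assume c: "0 \<le> c"
  have "c *\<^sub>R inf a b = - (c *\<^sub>R sup (-a) (-b))" by (simp add: neg_inf[symmetric])
  also have "\<dots> = inf (c *\<^sub>R a) (c *\<^sub>R b)" using scale_sup[OF c, of "-a" "-b"] by (simp add: neg_sup)
  finally show ?thesis .
qed

lemma lmod_scale_pos: "0 \<le> c \<Longrightarrow> lmod (c *\<^sub>R x) = c *\<^sub>R lmod (x::'a::{ordered_real_vector,lattice})"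
  by (simp add: lmod_def scale_sup)

lemma lmod_scale: "lmod (c *\<^sub>R x) = \<bar>c\<bar> *\<^sub>R lmod (x::'a::{ordered_real_vector,lattice})"
proof (cases "0 \<le> c")
  case True then show ?thesis by (simp add: lmod_scale_pos)
next
  case False
  then have "lmod (c *\<^sub>R x) = lmod ((-c) *\<^sub>R (-x))" by simp
  also have "\<dots> = (-c) *\<^sub>R lmod (-x)" using False by (intro lmod_scale_pos) simp
  finally show ?thesis using False by (simp add: lmod_minus)
qed

lemma scale_pos: "0 \<le> c \<Longrightarrow> sup (c *\<^sub>R x) 0 = c *\<^sub>R sup (x::'a::{ordered_real_vector,lattice}) 0"
  by (simp add: scale_sup)

lemma bl_norm_le: "banach_lattice TYPE('a::{banach,ordered_real_vector,lattice}) \<Longrightarrow> lmod (x::'a) \<le> lmod y \<Longrightarrow> norm x \<le> norm y"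
  by (simp add: banach_lattice_def)

lemma bl_norm_lmod: "banach_lattice TYPE('a::{banach,ordered_real_vector,lattice}) \<Longrightarrow> norm (lmod (x::'a)) = norm x"
  by (metis antisym bl_norm_le lmod_lmod order_refl)

lemma bl_norm_mono: "banach_lattice TYPE('a::{banach,ordered_real_vector,lattice}) \<Longrightarrow> 0 \<le> (x::'a) \<Longrightarrow> x \<le> y \<Longrightarrow> norm x \<le> norm y"
  by (metis bl_norm_le lmod_pos order_trans)

lemma bl_norm_pos: "banach_lattice TYPE('a::{banach,ordered_real_vector,lattice}) \<Longrightarrow> norm (sup (x::'a) 0) \<le> norm x"
  by (metis bl_norm_le lmod_pos pos_le_lmod sup_ge2)



lemma HB:
  fixes p :: "'a::real_vector \<Rightarrow> real" and v :: 'a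
  assumes sub: "\<And>x y. p (x+y) \<le> p x + p y" and hom: "\<And>c x. 0 \<le> c \<Longrightarrow> p (c *\<^sub>R x) = c * p x"
  shows "\<exists>f. linear f \<and> (\<forall>x. f x \<le> p x) \<and> f v = p v"
proof -
  have p0: "p 0 = 0" using hom[of 0 0] by simp
  have pneg: "0 \<le> p x + p (-x)" for x using sub[of x "-x"] p0 by simp
  define good where "good G \<longleftrightarrow> (\<forall>x a b. (x,a)\<in>G \<longrightarrow> (x,b)\<in>G \<longrightarrow> a = b) \<and>
     (\<forall>x a y b. (x,a)\<in>G \<longrightarrow> (y,b)\<in>G \<longrightarrow> (x+y,a+b)\<in>G) \<and>
     (\<forall>x a c. (x,a)\<in>G \<longrightarrow> (c *\<^sub>R x, c*a)\<in>G) \<and> (\<forall>x a. (x,a)\<in>G \<longrightarrow> a \<le> p x) \<and> (v, p v)\<in>G"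
    for G :: "('a \<times> real) set"
  define G0 where "G0 = {(t *\<^sub>R v, t * p v) | t. True}"
  have tle: "t * p v \<le> p (t *\<^sub>R v)" for t
  proof (cases "0 \<le> t")
    case True then show ?thesis by (simp add: hom)
  next
    case False
    have "p (t *\<^sub>R v) = p ((-t) *\<^sub>R (-v))" by simp
    also have "\<dots> = (-t) * p (-v)" using False by (intro hom) simp
    finally have e: "p (t *\<^sub>R v) = (-t) * p (-v)" .
    have "0 \<le> (-t) * (p v + p (-v))" using False pneg[of v] by (intro mult_nonneg_nonneg) auto
    then show ?thesis using e by (simp add: algebra_simps)
  qed
  have G0: "good G0"
    unfolding good_def G0_def
  proof (intro conjI allI impI)
    fix x a b assume "(x, a) \<in> {(t *\<^sub>R v, t * p v) |t. True}" "(x, b) \<in> {(t *\<^sub>R v, t * p v) |t. True}"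
    then obtain t s where ts: "x = t *\<^sub>R v" "a = t * p v" "x = s *\<^sub>R v" "b = s * p v" by blast
    show "a = b"
    proof (cases "v = 0")
      case True then show ?thesis using ts p0 by simp
    next
      case False then show ?thesis using ts by auto
    qed
  next
    fix x a y b assume "(x, a) \<in> {(t *\<^sub>R v, t * p v) |t. True}" "(y, b) \<in> {(t *\<^sub>R v, t * p v) |t. True}"
    then obtain t s where ts: "x = t *\<^sub>R v" "a = t * p v" "y = s *\<^sub>R v" "b = s * p v" by auto
    show "(x + y, a + b) \<in> {(t *\<^sub>R v, t * p v) |t. True}"
      using ts by (auto intro!: exI[of _ "t+s"] simp: algebra_simps)
  next
    fix x a c assume "(x, a) \<in> {(t *\<^sub>R v, t * p v) |t. True}"
    then obtain t where ts: "x = t *\<^sub>R v" "a = t * p v" by auto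
    show "(c *\<^sub>R x, c * a) \<in> {(t *\<^sub>R v, t * p v) |t. True}"
      using ts by (auto intro!: exI[of _ "c*t"] simp: algebra_simps)
  next
    fix x a assume "(x, a) \<in> {(t *\<^sub>R v, t * p v) |t. True}"
    then obtain t where ts: "x = t *\<^sub>R v" "a = t * p v" by auto
    show "a \<le> p x" using ts tle by simp
  next
    show "(v, p v) \<in> {(t *\<^sub>R v, t * p v) |t. True}" by (auto intro!: exI[of _ 1])
  qed
  have chains: "\<forall>C\<in>chains {G. good G}. \<exists>U\<in>{G. good G}. \<forall>X\<in>C. X \<subseteq> U"
  proof
    fix C assume C: "C \<in> chains {G. good G}"
    show "\<exists>U\<in>{G. good G}. \<forall>X\<in>C. X \<subseteq> U"
    proof (cases "C = {}")
      case True then show ?thesis using G0 by auto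
    next
      case False
      have ch: "X \<subseteq> Y \<or> Y \<subseteq> X" if "X\<in>C" "Y\<in>C" for X Y using chainsD[OF C that] .
      have gd: "good X" if "X\<in>C" for X using chainsD2[OF C] that by auto
      have two: "\<exists>X\<in>C. (x,a)\<in>X \<and> (y,b)\<in>X" if "(x,a)\<in>\<Union>C" "(y,b)\<in>\<Union>C" for x a y b
      proof -
        from that obtain X Y where XY: "X\<in>C" "(x,a)\<in>X" "Y\<in>C" "(y,b)\<in>Y" by auto
        from ch[OF XY(1,3)] XY show ?thesis by blast
      qed
      have "good (\<Union>C)" unfolding good_def
      proof (intro conjI allI impI)
        fix x a b assume "(x,a)\<in>\<Union>C" "(x,b)\<in>\<Union>C"
        then obtain X where "X\<in>C" "(x,a)\<in>X" "(x,b)\<in>X" using two by blast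
        then show "a = b" using gd unfolding good_def by blast
      next
        fix x a y b assume "(x,a)\<in>\<Union>C" "(y,b)\<in>\<Union>C"
        then obtain X where "X\<in>C" "(x,a)\<in>X" "(y,b)\<in>X" using two by blast
        then show "(x+y,a+b)\<in>\<Union>C" using gd unfolding good_def by blast
      next
        fix x a c assume "(x,a)\<in>\<Union>C"
        then obtain X where "X\<in>C" "(x,a)\<in>X" by blast
        then show "(c *\<^sub>R x, c*a)\<in>\<Union>C" using gd unfolding good_def by blast
      next
        fix x a assume "(x,a)\<in>\<Union>C"
        then obtain X where "X\<in>C" "(x,a)\<in>X" by blast
        then show "a \<le> p x" using gd unfolding good_def by blast
      next
        from False obtain X where "X \<in> C" by blast
        then show "(v, p v) \<in> \<Union>C" using gd unfolding good_def by blast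
      qed
      then show ?thesis by blast
    qed
  qed
  from Zorn_Lemma2[OF chains] obtain M where M: "good M" and Mmax: "\<And>X. good X \<Longrightarrow> M \<subseteq> X \<Longrightarrow> X = M"
    by blast
  have Mf: "\<And>x a b. (x,a)\<in>M \<Longrightarrow> (x,b)\<in>M \<Longrightarrow> a = b"
    and Ma: "\<And>x a y b. (x,a)\<in>M \<Longrightarrow> (y,b)\<in>M \<Longrightarrow> (x+y,a+b)\<in>M"
    and Ms: "\<And>x a c. (x,a)\<in>M \<Longrightarrow> (c *\<^sub>R x, c*a)\<in>M"
    and Mp: "\<And>x a. (x,a)\<in>M \<Longrightarrow> a \<le> p x"
    and Mv: "(v, p v)\<in>M" using M unfolding good_def by blast+
  have M0: "(0,0) \<in> M" using Ms[OF Mv, of 0] by simp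
  have tot: "\<forall>w. \<exists>a. (w,a)\<in>M"
  proof (rule ccontr)
    assume "\<not> (\<forall>w. \<exists>a. (w,a)\<in>M)"
    then obtain w where w: "\<And>a. (w,a) \<notin> M" by blast
    define S where "S = {b - p (y - w) | y b. (y,b)\<in>M}"
    define c where "c = Sup S"
    have Sne: "S \<noteq> {}" using Mv unfolding S_def by blast
    have key: "b - p (y - w) \<le> p (x + w) - a" if "(x,a)\<in>M" "(y,b)\<in>M" for x a y b
    proof -
      have "a + b \<le> p (x+y)" using Ma[OF that] Mp by blast
      moreover have "p (x+y) \<le> p (x+w) + p (y-w)" using sub[of "x+w" "y-w"] by simp
      ultimately show ?thesis by linarith
    qed
    have bdd: "bdd_above S" unfolding S_def bdd_above_def using key[OF Mv] by blast
    have c_ge: "b - p (y - w) \<le> c" if "(y,b)\<in>M" for y b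
      unfolding c_def by (rule cSup_upper[OF _ bdd]) (use that S_def in blast)
    have c_le: "c \<le> p (x + w) - a" if "(x,a)\<in>M" for x a
      unfolding c_def by (rule cSup_least[OF Sne]) (use key[OF that] S_def in blast)
    define M' where "M' = {(x + t *\<^sub>R w, a + t * c) | x a t. (x,a)\<in>M}"
    have inM': "(x + t *\<^sub>R w, a + t * c) \<in> M'" if "(x,a)\<in>M" for x a t
      using that unfolding M'_def by blast
    have "good M'" unfolding good_def
    proof (intro conjI allI impI)
      fix z \<alpha> \<beta> assume "(z,\<alpha>)\<in>M'" "(z,\<beta>)\<in>M'"
      then obtain x a t x' a' t' where h: "(x,a)\<in>M" "(x',a')\<in>M" "z = x + t *\<^sub>R w" "\<alpha> = a + t * c"
        "z = x' + t' *\<^sub>R w" "\<beta> = a' + t' * c" unfolding M'_def by blast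
      show "\<alpha> = \<beta>"
      proof (cases "t = t'")
        case True
        then have "x = x'" using h by simp
        then have "a = a'" using Mf h by blast
        then show ?thesis using h True by simp
      next
        case False
        have d: "(x - x', a - a') \<in> M" using Ma[OF h(1) Ms[OF h(2), of "-1"]] by simp
        have "x - x' = (t' - t) *\<^sub>R w" using h by (simp add: algebra_simps)
        then have "w = (1/(t'-t)) *\<^sub>R (x - x')" using False by simp
        then have "(w, (1/(t'-t)) * (a - a')) \<in> M" using Ms[OF d, of "1/(t'-t)"] by simp
        then show ?thesis using w by blast
      qed
    next
      fix z \<alpha> y \<beta> assume "(z,\<alpha>)\<in>M'" "(y,\<beta>)\<in>M'"
      then obtain x a t x' a' t' where h: "(x,a)\<in>M" "(x',a')\<in>M" "z = x + t *\<^sub>R w" "\<alpha> = a + t * c"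
        "y = x' + t' *\<^sub>R w" "\<beta> = a' + t' * c" unfolding M'_def by blast
      have "(x + x' + (t + t') *\<^sub>R w, a + a' + (t+t') * c) \<in> M'" by (rule inM'[OF Ma[OF h(1,2)]])
      then show "(z + y, \<alpha> + \<beta>) \<in> M'" using h by (simp add: algebra_simps)
    next
      fix z \<alpha> r assume "(z,\<alpha>)\<in>M'"
      then obtain x a t where h: "(x,a)\<in>M" "z = x + t *\<^sub>R w" "\<alpha> = a + t * c" unfolding M'_def by blast
      have "(r *\<^sub>R x + (r * t) *\<^sub>R w, r * a + (r*t) * c) \<in> M'" by (rule inM'[OF Ms[OF h(1)]])
      then show "(r *\<^sub>R z, r * \<alpha>) \<in> M'" using h by (simp add: algebra_simps)
    next
      fix z \<alpha> assume "(z,\<alpha>)\<in>M'"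
      then obtain x a t where h: "(x,a)\<in>M" "z = x + t *\<^sub>R w" "\<alpha> = a + t * c" unfolding M'_def by blast
      have "a + t * c \<le> p (x + t *\<^sub>R w)"
      proof (cases t "0::real" rule: linorder_cases)
        case equal then show ?thesis using Mp[OF h(1)] by simp
      next
        case greater
        have "c \<le> p ((1/t) *\<^sub>R x + w) - (1/t) * a" using c_le[OF Ms[OF h(1), of "1/t"]] .
        then have "t * c \<le> t * (p ((1/t) *\<^sub>R x + w) - (1/t) * a)" using greater by (intro mult_left_mono) auto
        also have "\<dots> = t * p ((1/t) *\<^sub>R x + w) - a" using greater by (simp add: algebra_simps)
        also have "t * p ((1/t) *\<^sub>R x + w) = p (t *\<^sub>R ((1/t) *\<^sub>R x + w))" using greater by (simp add: hom)
        also have "t *\<^sub>R ((1/t) *\<^sub>R x + w) = x + t *\<^sub>R w" using greater by (simp add: scaleR_add_right)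
        finally show ?thesis by simp
      next
        case less
        define s where "s = -t"
        have s: "0 < s" using less s_def by simp
        have "(1/s) * a - p ((1/s) *\<^sub>R x - w) \<le> c" using c_ge[OF Ms[OF h(1), of "1/s"]] .
        then have "s * ((1/s) * a - p ((1/s) *\<^sub>R x - w)) \<le> s * c" using s by (intro mult_left_mono) auto
        then have "a - s * p ((1/s) *\<^sub>R x - w) \<le> s * c" using s by (simp add: algebra_simps)
        also have "s * p ((1/s) *\<^sub>R x - w) = p (s *\<^sub>R ((1/s) *\<^sub>R x - w))" using s by (simp add: hom)
        also have "s *\<^sub>R ((1/s) *\<^sub>R x - w) = x + t *\<^sub>R w" using s by (simp add: scaleR_diff_right s_def)
        finally show ?thesis using s_def by simp
      qed
      then show "\<alpha> \<le> p z" using h by simp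
    next
      show "(v, p v) \<in> M'" using inM'[OF Mv, of 0] by simp
    qed
    moreover have "M \<subseteq> M'" using inM'[of _ _ 0] by auto
    ultimately have "M' = M" by (rule Mmax)
    moreover have "(w, c) \<in> M'" using inM'[OF M0, of 1] by simp
    ultimately show False using w by blast
  qed
  define f where "f x = (THE a. (x,a)\<in>M)" for x
  have fM: "(x, f x) \<in> M" for x
  proof -
    obtain a where "(x,a)\<in>M" using tot by blast
    then have "\<exists>!a. (x,a)\<in>M" using Mf by blast
    then show ?thesis unfolding f_def by (rule theI')
  qed
  have feq: "f x = a" if "(x,a)\<in>M" for x a using Mf[OF fM that] .
  have "linear f"
    by (rule linearI) (auto intro!: feq Ma fM Ms)
  moreover have "\<forall>x. f x \<le> p x" using fM Mp by blast
  moreover have "f v = p v" using feq[OF Mv] .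
  ultimately show ?thesis by blast
qed

lemma pos_functional_exists:
  assumes BL: "banach_lattice TYPE('a::{banach,ordered_real_vector,lattice})"
  shows "\<exists>f::'a\<Rightarrow>real. linear f \<and> (\<forall>y. f y \<le> norm (sup y 0)) \<and> f x0 = norm (sup x0 0)"
proof (rule HB)
  fix x y :: 'a
  have "norm (sup (x+y) 0) \<le> norm (sup x 0 + sup y 0)"
    using pos_add_le[of x y] by (intro bl_norm_mono[OF BL]) auto
  also have "\<dots> \<le> norm (sup x 0) + norm (sup y 0)" by (rule norm_triangle_ineq)
  finally show "norm (sup (x+y) 0) \<le> norm (sup x 0) + norm (sup y 0)" .
next
  fix c :: real and x :: 'a assume "0 \<le> c"
  then show "norm (sup (c *\<^sub>R x) 0) = c * norm (sup x 0)" by (simp add: scale_pos)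
qed

lemma posf_props:
  assumes BL: "banach_lattice TYPE('a::{banach,ordered_real_vector,lattice})"
    and lin: "linear (f::'a\<Rightarrow>real)" and le: "\<forall>y. f y \<le> norm (sup y 0)"
  shows "\<bar>f y\<bar> \<le> norm y" "0 \<le> y \<Longrightarrow> 0 \<le> f y" "bounded_linear f" "onorm f \<le> 1"
proof -
  have a: "f y \<le> norm y" for y using le bl_norm_pos[OF BL, of y] by (meson order_trans)
  have b: "- f y \<le> norm y" for y using a[of "-y"] linear_neg[OF lin, of y] by simp
  show c: "\<bar>f y\<bar> \<le> norm y" for y using a b by (simp add: abs_le_iff)
  show "0 \<le> y \<Longrightarrow> 0 \<le> f y"
  proof -
    assume "0 \<le> y"
    then have "sup (-y) 0 = 0" by (simp add: sup_absorb2)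
    then have "f (-y) \<le> 0" using le[rule_format, of "-y"] by simp
    then show "0 \<le> f y" using linear_neg[OF lin, of y] by simp
  qed
  show bl: "bounded_linear f"
    using lin c by (intro bounded_linear_intro[where K=1]) (auto simp: linear_add linear_scale)
  show "onorm f \<le> 1" using c by (intro onorm_bound) auto
qed



lemma unit_exists:
  assumes AM: "AM_space TYPE('a::{banach,ordered_real_vector,lattice})"
    and sep: "separable_type TYPE('a)"
    and att: "\<forall>f::'a \<Rightarrow> real. positive_dual f \<longrightarrow> attains_norm f"
  shows "\<exists>e::'a. 0 \<le> e \<and> norm e = 1 \<and> (\<forall>y. lmod y \<le> norm y *\<^sub>R e)"
proof -
  have BL: "banach_lattice TYPE('a)" using AM by (simp add: AM_space_def)
  have AMn: "\<And>x y::'a. 0 \<le> x \<Longrightarrow> 0 \<le> y \<Longrightarrow> norm (sup x y) = max (norm x) (norm y)"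
    using AM by (simp add: AM_space_def)
  obtain D :: "'a set" where D: "countable D" "closure D = UNIV" using sep by (auto simp: separable_type_def)
  have Dne: "D \<noteq> {}" using D by auto
  define d where "d n = from_nat_into D n" for n
  have dsurj: "\<exists>n. d n = y" if "y \<in> D" for y using from_nat_into_surj[OF D(1) that] d_def by simp
  have "\<forall>n. \<exists>f::'a\<Rightarrow>real. linear f \<and> (\<forall>y. f y \<le> norm (sup y 0)) \<and> f (d n) = norm (sup (d n) 0)"
    using pos_functional_exists[OF BL] by blast
  then obtain fs where fs: "\<And>n. linear (fs n)" "\<And>n y. fs n y \<le> norm (sup y 0)"
      "\<And>n. fs n (d n) = norm (sup (d n) 0)" by metis
  have fabs: "\<bar>fs n y\<bar> \<le> norm y" for n y using posf_props(1)[OF BL fs(1)] fs(2) by blast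
  have fpos: "0 \<le> y \<Longrightarrow> 0 \<le> fs n y" for n y using posf_props(2)[OF BL fs(1)] fs(2) by blast
  define F where "F y = (\<Sum>n. (1/2::real)^n * fs n y)" for y
  have gsum: "summable (\<lambda>n. (1/2::real)^n * c)" for c
    by (rule summable_mult2) (rule summable_geometric, simp)
  have summ: "summable (\<lambda>n. (1/2::real)^n * fs n y)" for y
  proof (rule summable_comparison_test'[OF gsum[of "norm y"]])
    fix n :: nat
    show "norm ((1/2::real)^n * fs n y) \<le> (1/2)^n * norm y"
      using fabs[of n y] by (simp add: abs_mult mult_left_mono)
  qed
  have Fadd: "F (x + y) = F x + F y" for x y
    unfolding F_def using suminf_add[OF summ[of x] summ[of y]]
    by (simp add: linear_add[OF fs(1)] distrib_left)
  have Fscale: "F (c *\<^sub>R x) = c * F x" for c x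
    unfolding F_def using suminf_mult[OF summ[of x], of c]
    by (simp add: linear_scale[OF fs(1)] algebra_simps)
  have Fup: "F y \<le> 2 * norm y" for y
  proof -
    have "F y \<le> (\<Sum>n. (1/2::real)^n * norm y)"
      unfolding F_def by (rule suminf_le[OF _ summ gsum]) (use fabs in \<open>simp add: mult_left_mono abs_le_iff\<close>)
    also have "\<dots> = (\<Sum>n. (1/2::real)^n) * norm y"
      by (rule suminf_mult2[symmetric]) (rule summable_geometric, simp)
    also have "(\<Sum>n. (1/2::real)^n) = 2" by (subst suminf_geometric) auto
    finally show ?thesis .
  qed
  have Fabs: "\<bar>F y\<bar> \<le> 2 * norm y" for y
    using Fup[of y] Fup[of "-y"] Fscale[of "-1" y] by (simp add: abs_le_iff)
  have Fbl: "bounded_linear F"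
    by (rule bounded_linear_intro[where K=2]) (use Fadd Fscale Fabs in \<open>auto simp: mult.commute\<close>)
  have Fpos: "0 \<le> y \<Longrightarrow> 0 \<le> F y" for y
    unfolding F_def by (rule suminf_nonneg[OF summ]) (simp add: fpos)
  have Fstrict: "0 < F y" if y0: "0 \<le> y" and yn: "y \<noteq> 0" for y
  proof -
    have ny: "0 < norm y" using yn by simp
    have "y \<in> closure D" using D by simp
    then obtain z where z: "z \<in> D" "dist z y < norm y / 4"
      using closure_approachable[of y D] ny by (metis zero_less_divide_iff zero_less_numeral)
    obtain n where n: "d n = z" using dsurj[OF z(1)] by blast
    have "y \<le> sup (d n) 0 + sup (y - d n) 0"
    proof -
      have "y = d n + (y - d n)" by simp
      also have "\<dots> \<le> sup (d n) 0 + sup (y - d n) 0" by (intro add_mono) auto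
      finally show ?thesis .
    qed
    then have "norm y \<le> norm (sup (d n) 0 + sup (y - d n) 0)" by (intro bl_norm_mono[OF BL y0])
    also have "\<dots> \<le> norm (sup (d n) 0) + norm (sup (y - d n) 0)" by (rule norm_triangle_ineq)
    also have "norm (sup (y - d n) 0) \<le> norm (y - d n)" by (rule bl_norm_pos[OF BL])
    finally have a: "norm y \<le> norm (sup (d n) 0) + norm (y - d n)" by simp
    have e1: "fs n y = fs n (d n) - fs n (d n - y)" using linear_diff[OF fs(1), of n "d n" "d n - y"] by simp
    have e2: "fs n (d n - y) \<le> norm (d n - y)" using fabs[of n "d n - y"] by simp
    have "norm (sup (d n) 0) - norm (d n - y) \<le> fs n y" using e1 e2 fs(3)[of n] by linarith
    moreover have "norm (d n - y) < norm y / 4" using z n by (simp add: dist_norm)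
    moreover have "norm (y - d n) = norm (d n - y)" by (rule norm_minus_commute)
    ultimately have "0 < fs n y" using a ny by linarith
    then have "0 < (1/2::real)^n * fs n y" by simp
    then show ?thesis unfolding F_def
      by (intro suminf_pos2[OF summ, of _ n]) (simp_all add: fpos y0)
  qed
  have "positive_dual F" unfolding positive_dual_def using Fbl Fpos by blast
  with att obtain x0 where x0: "norm x0 = 1" "F x0 = onorm F" unfolding attains_norm_def by blast
  define e where "e = lmod x0"
  have e0: "0 \<le> e" unfolding e_def by (rule lmod_nonneg)
  have en: "norm e = 1" unfolding e_def using bl_norm_lmod[OF BL] x0 by simp
  have Fle: "F x \<le> onorm F * norm x" for x using onorm[OF Fbl, of x] by simp
  have "F x0 \<le> F e"
  proof -
    have "0 \<le> e - x0" unfolding e_def using le_lmod(1)[of x0] by simp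
    then have "0 \<le> F (e - x0)" by (rule Fpos)
    then show ?thesis using Fadd[of "e - x0" x0] by simp
  qed
  then have Fe: "F e = onorm F" using Fle[of e] en x0 by simp
  have below: "y \<le> e" if "0 \<le> y" "norm y \<le> 1" for y
  proof -
    let ?z = "sup y e"
    have "norm ?z = 1" using AMn[OF that(1) e0] en that(2) by simp
    then have "F ?z \<le> onorm F" using Fle[of ?z] by simp
    then have "F (?z - e) \<le> 0" using Fadd[of "?z - e" e] Fe by simp
    moreover have "0 \<le> ?z - e" by simp
    ultimately have "?z - e = 0" using Fstrict[of "?z - e"] by linarith
    then show "y \<le> e" by (metis eq_iff_diff_eq_0 sup.cobounded1)
  qed
  have dom: "lmod y \<le> norm y *\<^sub>R e" for y
  proof (cases "y = 0")
    case True then show ?thesis by (simp add: lmod_pos)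
  next
    case False
    define u where "u = (1/norm y) *\<^sub>R lmod y"
    have u0: "0 \<le> u" unfolding u_def by (intro scaleR_nonneg_nonneg lmod_nonneg) simp
    have "norm u = 1" unfolding u_def using False bl_norm_lmod[OF BL, of y] by simp
    then have "u \<le> e" using below u0 by simp
    then have "norm y *\<^sub>R u \<le> norm y *\<^sub>R e" by (rule scaleR_left_mono) simp
    then show ?thesis using False unfolding u_def by simp
  qed
  show ?thesis using e0 en dom by blast
qed



definition lideal :: "'a::{ordered_real_vector,lattice} set \<Rightarrow> bool" where
  "lideal J \<longleftrightarrow> 0 \<in> J \<and> (\<forall>x\<in>J. \<forall>y\<in>J. x+y\<in>J) \<and> (\<forall>x\<in>J. \<forall>c. c *\<^sub>R x \<in> J) \<and>
     (\<forall>x y. y\<in>J \<longrightarrow> lmod x \<le> lmod y \<longrightarrow> x\<in>J)"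

locale amu =
  fixes e :: "'a::{banach,ordered_real_vector,lattice}"
  assumes BL: "banach_lattice TYPE('a)"
    and e0: "0 \<le> e" and en: "norm e = 1" and dom: "\<And>y. lmod y \<le> norm y *\<^sub>R e"
begin

definition Kset :: "('a \<Rightarrow> real) set" where
  "Kset = {\<phi>. (\<forall>x z. \<phi> (x+z) = \<phi> x + \<phi> z) \<and> (\<forall>c x. \<phi> (c *\<^sub>R x) = c * \<phi> x) \<and>
     (\<forall>x z. \<phi> (sup x z) = max (\<phi> x) (\<phi> z)) \<and> \<phi> e = 1}"

lemma upper: "y \<le> norm y *\<^sub>R e" using le_lmod(1)[of y] dom[of y] by (rule order_trans)
lemma lower: "- (norm y *\<^sub>R e) \<le> y" using le_lmod(2)[of y] dom[of y] by (metis order_trans neg_le_iff_le minus_minus)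

lemma normbound: "0 \<le> c \<Longrightarrow> lmod y \<le> c *\<^sub>R e \<Longrightarrow> norm y \<le> c"
proof -
  assume c: "0 \<le> c" and l: "lmod y \<le> c *\<^sub>R e"
  have "lmod (c *\<^sub>R e) = c *\<^sub>R e" using c e0 by (intro lmod_pos scaleR_nonneg_nonneg)
  then have "norm y \<le> norm (c *\<^sub>R e)" using l by (intro bl_norm_le[OF BL]) simp
  then show ?thesis using c en by simp
qed

lemma e_ne0: "e \<noteq> 0" using en by auto

lemma K_add: "\<phi> \<in> Kset \<Longrightarrow> \<phi> (x + z) = \<phi> x + \<phi> z" by (simp add: Kset_def)
lemma K_scale: "\<phi> \<in> Kset \<Longrightarrow> \<phi> (c *\<^sub>R x) = c * \<phi> x" by (simp add: Kset_def)
lemma K_sup: "\<phi> \<in> Kset \<Longrightarrow> \<phi> (sup x z) = max (\<phi> x) (\<phi> z)" by (simp add: Kset_def)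
lemma K_e: "\<phi> \<in> Kset \<Longrightarrow> \<phi> e = 1" by (simp add: Kset_def)
lemma K_neg: "\<phi> \<in> Kset \<Longrightarrow> \<phi> (- x) = - \<phi> x" using K_scale[of \<phi> "-1" x] by simp
lemma K_diff: "\<phi> \<in> Kset \<Longrightarrow> \<phi> (x - z) = \<phi> x - \<phi> z"
  using K_add[of \<phi> x "-z"] K_neg[of \<phi> z] by simp
lemma K_zero: "\<phi> \<in> Kset \<Longrightarrow> \<phi> 0 = 0" using K_scale[of \<phi> 0 0] by simp
lemma K_mono: "\<phi> \<in> Kset \<Longrightarrow> x \<le> z \<Longrightarrow> \<phi> x \<le> \<phi> z"
  using K_sup[of \<phi> x z] by (simp add: sup_absorb2)
lemma K_bound: "\<phi> \<in> Kset \<Longrightarrow> \<bar>\<phi> x\<bar> \<le> norm x"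
  using K_mono[OF _ upper[of x], of \<phi>] K_mono[OF _ lower[of x], of \<phi>] K_scale[of \<phi> "norm x" e]
    K_neg[of \<phi> "norm x *\<^sub>R e"] K_e[of \<phi>] by (simp add: abs_le_iff)
lemma K_lmod: "\<phi> \<in> Kset \<Longrightarrow> \<phi> (lmod x) = \<bar>\<phi> x\<bar>"
  unfolding lmod_def by (simp add: K_sup K_neg abs_if)
lemma K_inf: "\<phi> \<in> Kset \<Longrightarrow> \<phi> (inf x z) = min (\<phi> x) (\<phi> z)"
proof -
  assume k: "\<phi> \<in> Kset"
  have "inf x z = x + z - sup x z" using add_inf_sup[of x z] by (simp add: algebra_simps)
  then show ?thesis using k by (simp add: K_add K_diff K_sup)
qed

lemma hom_from_prime:
  assumes Mid: "lideal M" and Me: "e \<notin> M" and prime: "\<And>z. sup z 0 \<in> M \<or> sup (-z) 0 \<in> M"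
  shows "\<exists>\<phi>\<in>Kset. \<forall>z. sup (e - z) 0 \<in> M \<longrightarrow> 1 \<le> \<phi> z"
proof -
  have M0: "0 \<in> M" and Madd: "\<And>a b. a \<in> M \<Longrightarrow> b \<in> M \<Longrightarrow> a + b \<in> M"
    and Msc: "\<And>a c. a \<in> M \<Longrightarrow> c *\<^sub>R a \<in> M"
    and Msol: "\<And>a b. b \<in> M \<Longrightarrow> lmod a \<le> lmod b \<Longrightarrow> a \<in> M"
    using Mid unfolding lideal_def by blast+
  have Mpos: "a \<in> M" if "0 \<le> a" "a \<le> b" "b \<in> M" for a b
  proof -
    have "0 \<le> b" using that by simp
    then show ?thesis using Msol[OF that(3), of a] lmod_pos[OF that(1)] lmod_pos[of b] that(2) by simp
  qed
  define leM where "leM z w \<longleftrightarrow> sup (z - w) 0 \<in> M" for z w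
  have le0: "leM z w" if "z \<le> w" for z w unfolding leM_def using that M0 by (simp add: sup_absorb2)
  have addM: "leM (a + c) (b + d)" if "leM a b" "leM c d" for a b c d
  proof -
    have h1: "sup ((a + c) - (b + d)) 0 \<le> sup (a - b) 0 + sup (c - d) 0"
      using pos_add_le[of "a - b" "c - d"] by (simp add: algebra_simps)
    have h2: "sup (a - b) 0 + sup (c - d) 0 \<in> M" using that Madd unfolding leM_def by blast
    show ?thesis unfolding leM_def by (rule Mpos[OF _ h1 h2]) simp
  qed
  have trans: "leM a c" if "leM a b" "leM b c" for a b c
    using addM[OF that] unfolding leM_def by (simp add: algebra_simps)
  have scaleM: "leM (c *\<^sub>R a) (c *\<^sub>R b)" if "0 \<le> c" "leM a b" for a b c
  proof -
    have "c *\<^sub>R sup (a - b) 0 \<in> M" using that Msc unfolding leM_def by blast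
    then show ?thesis unfolding leM_def using scale_pos[OF that(1), of "a - b"] by (simp add: scaleR_diff_right)
  qed
  have tot: "leM z w \<or> leM w z" for z w using prime[of "z - w"] unfolding leM_def by simp
  have supM: "leM (sup z w) v" if "leM z v" "leM w v" for z w v
  proof -
    have "sup z w - v = sup (z - v) (w - v)" using sup_add_right[of z w "-v"] by simp
    then have "sup (sup z w - v) 0 = sup (sup (z - v) 0) (sup (w - v) 0)"
      by (simp add: sup_aci)
    also have "\<dots> \<le> sup (z - v) 0 + sup (w - v) 0" by (intro sup_le_add_pos) auto
    finally have h1: "sup (sup z w - v) 0 \<le> sup (z - v) 0 + sup (w - v) 0" .
    have h2: "sup (z - v) 0 + sup (w - v) 0 \<in> M" using that Madd unfolding leM_def by blast
    show ?thesis unfolding leM_def by (rule Mpos[OF _ h1 h2]) simp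
  qed
  have arch: "leM (a *\<^sub>R e) (b *\<^sub>R e) \<longleftrightarrow> a \<le> b" for a b
  proof
    assume "a \<le> b" then show "leM (a *\<^sub>R e) (b *\<^sub>R e)" using e0 by (intro le0 scaleR_right_mono)
  next
    assume h: "leM (a *\<^sub>R e) (b *\<^sub>R e)"
    show "a \<le> b"
    proof (rule ccontr)
      assume "\<not> a \<le> b"
      then have ab: "0 < a - b" by simp
      have "0 \<le> (a - b) *\<^sub>R e" using ab e0 by (intro scaleR_nonneg_nonneg) auto
      then have "sup (a *\<^sub>R e - b *\<^sub>R e) 0 = (a - b) *\<^sub>R e"
        by (simp add: sup_absorb1 scaleR_diff_left)
      then have "(a - b) *\<^sub>R e \<in> M" using h unfolding leM_def by simp
      then have "(1/(a-b)) *\<^sub>R ((a - b) *\<^sub>R e) \<in> M" by (rule Msc)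
      then show False using ab Me by simp
    qed
  qed
  define S where "S z = {l. leM z (l *\<^sub>R e)}" for z
  define \<phi> where "\<phi> z = Inf (S z)" for z
  have Sne: "S z \<noteq> {}" for z unfolding S_def using le0[OF upper[of z]] by blast
  have Sbdd: "bdd_below (S z)" for z
  proof (rule bdd_belowI[of _ "- norm z"])
    fix l assume "l \<in> S z"
    then have h1: "leM z (l *\<^sub>R e)" unfolding S_def by simp
    have h2: "leM ((- norm z) *\<^sub>R e) z" using lower[of z] by (intro le0) simp
    have "leM ((- norm z) *\<^sub>R e) (l *\<^sub>R e)" using trans[OF h2 h1] .
    then show "- norm z \<le> l" using arch by blast
  qed
  have K1: "leM z (l *\<^sub>R e)" if "\<phi> z < l" for z l
  proof -
    have "Inf (S z) < l" using that unfolding \<phi>_def .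
    then have "\<exists>s\<in>S z. s < l" by (simp only: cInf_less_iff[OF Sne Sbdd])
    then obtain s where s: "s \<in> S z" "s < l" by blast
    have "leM z (s *\<^sub>R e)" using s(1) unfolding S_def by simp
    moreover have "leM (s *\<^sub>R e) (l *\<^sub>R e)" using arch[of s l] s(2) by simp
    ultimately show ?thesis by (rule trans)
  qed
  have K3: "\<phi> z \<le> l" if "leM z (l *\<^sub>R e)" for z l
    unfolding \<phi>_def by (rule cInf_lower[OF _ Sbdd]) (use that S_def in simp)
  have K4: "l \<le> \<phi> z" if "leM (l *\<^sub>R e) z" for z l
  proof (rule ccontr)
    assume "\<not> l \<le> \<phi> z"
    then have "\<phi> z < (\<phi> z + l)/2" "(\<phi> z + l)/2 < l" by auto
    then have "leM z (((\<phi> z + l)/2) *\<^sub>R e)" by (intro K1)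
    then have "leM (l *\<^sub>R e) (((\<phi> z + l)/2) *\<^sub>R e)" using trans[OF that] by blast
    then show False using arch \<open>(\<phi> z + l)/2 < l\<close> by simp
  qed
  have K2: "leM (l *\<^sub>R e) z" if "l < \<phi> z" for z l
    using tot[of z "l *\<^sub>R e"] K3[of z l] that by auto
  have phi_add: "\<phi> (z + w) = \<phi> z + \<phi> w" for z w
  proof (rule antisym)
    show "\<phi> (z + w) \<le> \<phi> z + \<phi> w"
    proof (rule field_le_epsilon)
      fix \<epsilon> :: real assume "0 < \<epsilon>"
      then have "leM z ((\<phi> z + \<epsilon>/2) *\<^sub>R e)" "leM w ((\<phi> w + \<epsilon>/2) *\<^sub>R e)" by (auto intro!: K1)
      from addM[OF this] have A: "leM (z + w) ((\<phi> z + \<epsilon>/2) *\<^sub>R e + (\<phi> w + \<epsilon>/2) *\<^sub>R e)" .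
      have "(\<phi> z + \<epsilon>/2) *\<^sub>R e + (\<phi> w + \<epsilon>/2) *\<^sub>R e = (\<phi> z + \<phi> w + \<epsilon>) *\<^sub>R e"
        unfolding scaleR_left_distrib[symmetric] by (rule arg_cong[where f="\<lambda>t. t *\<^sub>R e"]) simp
      with A have "leM (z + w) ((\<phi> z + \<phi> w + \<epsilon>) *\<^sub>R e)" by simp
      then show "\<phi> (z + w) \<le> \<phi> z + \<phi> w + \<epsilon>" by (rule K3)
    qed
    show "\<phi> z + \<phi> w \<le> \<phi> (z + w)"
    proof (rule field_le_epsilon)
      fix \<epsilon> :: real assume "0 < \<epsilon>"
      then have "leM ((\<phi> z - \<epsilon>/2) *\<^sub>R e) z" "leM ((\<phi> w - \<epsilon>/2) *\<^sub>R e) w" by (auto intro!: K2)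
      from addM[OF this] have A: "leM ((\<phi> z - \<epsilon>/2) *\<^sub>R e + (\<phi> w - \<epsilon>/2) *\<^sub>R e) (z + w)" .
      have "(\<phi> z - \<epsilon>/2) *\<^sub>R e + (\<phi> w - \<epsilon>/2) *\<^sub>R e = (\<phi> z + \<phi> w - \<epsilon>) *\<^sub>R e"
        unfolding scaleR_left_distrib[symmetric] by (rule arg_cong[where f="\<lambda>t. t *\<^sub>R e"]) simp
      with A have "leM ((\<phi> z + \<phi> w - \<epsilon>) *\<^sub>R e) (z + w)" by simp
      then have "\<phi> z + \<phi> w - \<epsilon> \<le> \<phi> (z + w)" by (rule K4)
      then show "\<phi> z + \<phi> w \<le> \<phi> (z + w) + \<epsilon>" by simp
    qed
  qed
  have phi0: "\<phi> 0 = 0" using phi_add[of 0 0] by simp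
  have phi_neg: "\<phi> (- z) = - \<phi> z" for z using phi_add[of z "-z"] phi0 by simp
  have phi_up: "\<phi> (c *\<^sub>R z) \<le> c * \<phi> z" if c: "0 < c" for c z
  proof -
    have "\<phi> (c *\<^sub>R z) / c \<le> \<phi> z"
    proof (rule dense_ge)
      fix l assume "\<phi> z < l"
      then have "leM z (l *\<^sub>R e)" by (rule K1)
      then have "leM (c *\<^sub>R z) (c *\<^sub>R (l *\<^sub>R e))" using c by (intro scaleM) auto
      then have "leM (c *\<^sub>R z) ((c * l) *\<^sub>R e)" by simp
      then have "\<phi> (c *\<^sub>R z) \<le> c * l" by (rule K3)
      then show "\<phi> (c *\<^sub>R z) / c \<le> l" using c by (simp add: field_simps)
    qed
    then show ?thesis using c by (simp add: field_simps)
  qed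
  have phi_pscale: "\<phi> (c *\<^sub>R z) = c * \<phi> z" if c: "0 < c" for c z
  proof (rule antisym)
    show "\<phi> (c *\<^sub>R z) \<le> c * \<phi> z" using phi_up[OF c] .
    have "\<phi> z = \<phi> ((1/c) *\<^sub>R (c *\<^sub>R z))" using c by simp
    also have "\<dots> \<le> (1/c) * \<phi> (c *\<^sub>R z)" using c by (intro phi_up) simp
    finally show "c * \<phi> z \<le> \<phi> (c *\<^sub>R z)" using c by (simp add: field_simps)
  qed
  have phi_scale: "\<phi> (c *\<^sub>R z) = c * \<phi> z" for c z
  proof (cases c "0::real" rule: linorder_cases)
    case less
    have "\<phi> (c *\<^sub>R z) = \<phi> (- ((-c) *\<^sub>R z))" by simp
    also have "\<dots> = - ((-c) * \<phi> z)" using less phi_neg phi_pscale[of "-c"] by simp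
    finally show ?thesis by simp
  qed (auto simp: phi0 phi_pscale)
  have phi_sup: "\<phi> (sup z w) = max (\<phi> z) (\<phi> w)" for z w
  proof (rule antisym)
    show "\<phi> (sup z w) \<le> max (\<phi> z) (\<phi> w)"
    proof (rule dense_ge)
      fix l assume "max (\<phi> z) (\<phi> w) < l"
      then have "leM z (l *\<^sub>R e)" "leM w (l *\<^sub>R e)" by (auto intro!: K1)
      then show "\<phi> (sup z w) \<le> l" by (intro K3 supM)
    qed
    have mono: "\<phi> a \<le> \<phi> (sup a b)" for a b
    proof (rule dense_ge)
      fix l assume "\<phi> (sup a b) < l"
      then have "leM (sup a b) (l *\<^sub>R e)" by (rule K1)
      then have "leM a (l *\<^sub>R e)" using trans[OF le0[of a "sup a b"]] by simp
      then show "\<phi> a \<le> l" by (rule K3)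
    qed
    show "max (\<phi> z) (\<phi> w) \<le> \<phi> (sup z w)" using mono[of z w] mono[of w z] by (simp add: sup_commute)
  qed
  have phi_e: "\<phi> e = 1"
    using K3[of e 1] K4[of 1 e] le0[of e e] by simp
  have "\<phi> \<in> Kset" unfolding Kset_def using phi_add phi_scale phi_sup phi_e by blast
  moreover have "\<forall>z. sup (e - z) 0 \<in> M \<longrightarrow> 1 \<le> \<phi> z"
  proof (intro allI impI)
    fix z assume "sup (e - z) 0 \<in> M"
    then have "leM (1 *\<^sub>R e) z" unfolding leM_def by simp
    then show "1 \<le> \<phi> z" by (rule K4)
  qed
  ultimately show ?thesis by blast
qed

lemma hom_exists:
  assumes y0: "0 \<le> y" and yn: "norm y = 1"
  shows "\<exists>\<phi>\<in>Kset. \<phi> y = 1"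
proof -
  have ye: "y \<le> e" using dom[of y] lmod_pos[OF y0] yn by simp
  have ey0: "0 \<le> e - y" using ye by simp
  define J0 where "J0 = {z. \<exists>l. lmod z \<le> l *\<^sub>R (e - y)}"
  have J0: "lideal J0" unfolding lideal_def J0_def
  proof (intro conjI ballI allI impI)
    show "0 \<in> {z. \<exists>l. lmod z \<le> l *\<^sub>R (e - y)}" by (auto intro!: exI[of _ 0] simp: lmod_pos)
  next
    fix x z assume "x \<in> {z. \<exists>l. lmod z \<le> l *\<^sub>R (e - y)}" "z \<in> {z. \<exists>l. lmod z \<le> l *\<^sub>R (e - y)}"
    then obtain l1 l2 where "lmod x \<le> l1 *\<^sub>R (e - y)" "lmod z \<le> l2 *\<^sub>R (e - y)" by auto
    then have "lmod (x + z) \<le> (l1 + l2) *\<^sub>R (e - y)"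
      using lmod_triangle[of x z] add_mono by (metis order_trans scaleR_left_distrib)
    then show "x + z \<in> {z. \<exists>l. lmod z \<le> l *\<^sub>R (e - y)}" by blast
  next
    fix x c assume "x \<in> {z. \<exists>l. lmod z \<le> l *\<^sub>R (e - y)}"
    then obtain l where "lmod x \<le> l *\<^sub>R (e - y)" by auto
    then have "\<bar>c\<bar> *\<^sub>R lmod x \<le> \<bar>c\<bar> *\<^sub>R (l *\<^sub>R (e - y))" by (intro scaleR_left_mono) auto
    then have "lmod (c *\<^sub>R x) \<le> (\<bar>c\<bar> * l) *\<^sub>R (e - y)" by (simp add: lmod_scale)
    then show "c *\<^sub>R x \<in> {z. \<exists>l. lmod z \<le> l *\<^sub>R (e - y)}" by blast
  next
    fix x z assume "z \<in> {z. \<exists>l. lmod z \<le> l *\<^sub>R (e - y)}" "lmod x \<le> lmod z"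
    then show "x \<in> {z. \<exists>l. lmod z \<le> l *\<^sub>R (e - y)}" by (auto intro: order_trans)
  qed
  have eyJ0: "e - y \<in> J0" unfolding J0_def using lmod_pos[OF ey0] by (auto intro!: exI[of _ 1])
  have eJ0: "e \<notin> J0"
  proof
    assume "e \<in> J0"
    then obtain l where l: "e \<le> l *\<^sub>R (e - y)" unfolding J0_def using lmod_pos[OF e0] by auto
    show False
    proof (cases "l \<le> 0")
      case True
      then have "l *\<^sub>R (e - y) \<le> 0" using ey0 by (simp add: scaleR_nonpos_nonneg)
      then have "e = 0" using l e0 by simp
      then show False using e_ne0 by simp
    next
      case False
      then have "(1/l) *\<^sub>R e \<le> (1/l) *\<^sub>R (l *\<^sub>R (e - y))" using l by (intro scaleR_left_mono) auto
      then have "(1/l) *\<^sub>R e \<le> e - y" using False by simp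
      then have yle: "y \<le> (1 - 1/l) *\<^sub>R e" by (simp add: algebra_simps)
      show False
      proof (cases "0 \<le> 1 - 1/l")
        case True
        have "norm y \<le> 1 - 1/l" using normbound[OF True] yle lmod_pos[OF y0] by simp
        then show False using yn False by (simp add: field_simps)
      next
        case c: False
        then have "(1 - 1/l) *\<^sub>R e \<le> 0" using e0 by (simp add: scaleR_nonpos_nonneg)
        then have "y = 0" using yle y0 by simp
        then show False using yn by simp
      qed
    qed
  qed
  define A where "A = {J. lideal J \<and> e - y \<in> J \<and> e \<notin> J}"
  have chains: "\<forall>C\<in>chains A. \<exists>U\<in>A. \<forall>X\<in>C. X \<subseteq> U"
  proof
    fix C assume C: "C \<in> chains A"
    show "\<exists>U\<in>A. \<forall>X\<in>C. X \<subseteq> U"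
    proof (cases "C = {}")
      case True then show ?thesis using J0 eyJ0 eJ0 A_def by auto
    next
      case False
      have ch: "X \<subseteq> Y \<or> Y \<subseteq> X" if "X\<in>C" "Y\<in>C" for X Y using chainsD[OF C that] .
      have gd: "X \<in> A" if "X\<in>C" for X using chainsD2[OF C] that by auto
      have "lideal (\<Union>C)" unfolding lideal_def
      proof (intro conjI ballI allI impI)
        from False obtain X where "X \<in> C" by blast
        then show "0 \<in> \<Union>C" using gd unfolding A_def lideal_def by blast
      next
        fix x z assume "x \<in> \<Union>C" "z \<in> \<Union>C"
        then obtain X Z where XZ: "X\<in>C" "x\<in>X" "Z\<in>C" "z\<in>Z" by auto
        from ch[OF XZ(1,3)] XZ obtain W where "W\<in>C" "x\<in>W" "z\<in>W" by blast
        then show "x + z \<in> \<Union>C" using gd unfolding A_def lideal_def by blast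
      next
        fix x c assume "x \<in> \<Union>C"
        then obtain X where "X\<in>C" "x\<in>X" by auto
        then show "c *\<^sub>R x \<in> \<Union>C" using gd unfolding A_def lideal_def by blast
      next
        fix x z assume "z \<in> \<Union>C" "lmod x \<le> lmod z"
        then obtain X where "X\<in>C" "z\<in>X" "lmod x \<le> lmod z" by auto
        then show "x \<in> \<Union>C" using gd unfolding A_def lideal_def by blast
      qed
      moreover have "e - y \<in> \<Union>C" using False gd unfolding A_def by blast
      moreover have "e \<notin> \<Union>C" using gd unfolding A_def by blast
      ultimately show ?thesis unfolding A_def by blast
    qed
  qed
  from Zorn_Lemma2[OF chains] obtain M where MA: "M \<in> A" and Mmax: "\<And>X. X \<in> A \<Longrightarrow> M \<subseteq> X \<Longrightarrow> X = M"
    by blast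
  have Mid: "lideal M" and My: "e - y \<in> M" and Me: "e \<notin> M" using MA A_def by auto
  have M0: "0 \<in> M" and Madd: "\<And>a b. a \<in> M \<Longrightarrow> b \<in> M \<Longrightarrow> a + b \<in> M"
    and Msc: "\<And>a c. a \<in> M \<Longrightarrow> c *\<^sub>R a \<in> M"
    and Msol: "\<And>a b. b \<in> M \<Longrightarrow> lmod a \<le> lmod b \<Longrightarrow> a \<in> M"
    using Mid unfolding lideal_def by blast+
  have Mpos: "a \<in> M" if "0 \<le> a" "a \<le> b" "b \<in> M" for a b
  proof -
    have "0 \<le> b" using that by simp
    then show ?thesis using Msol[OF that(3), of a] lmod_pos[OF that(1)] lmod_pos[of b] that(2) by simp
  qed
  have Mlmod: "lmod a \<in> M" if "a \<in> M" for a using Msol[OF that, of "lmod a"] lmod_lmod[of a] by simp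
  have gen: "\<exists>m\<in>M. \<exists>l\<ge>0. e \<le> lmod m + l *\<^sub>R u" if u0: "0 \<le> u" and uM: "u \<notin> M" for u
  proof -
    define Mu where "Mu = {w. \<exists>m\<in>M. \<exists>l. lmod w \<le> lmod m + l *\<^sub>R u}"
    have "lideal Mu" unfolding lideal_def Mu_def
    proof (intro conjI ballI allI impI)
      show "0 \<in> {w. \<exists>m\<in>M. \<exists>l. lmod w \<le> lmod m + l *\<^sub>R u}" using M0 by (auto intro!: exI[of _ 0])
    next
      fix x z assume "x \<in> {w. \<exists>m\<in>M. \<exists>l. lmod w \<le> lmod m + l *\<^sub>R u}" "z \<in> {w. \<exists>m\<in>M. \<exists>l. lmod w \<le> lmod m + l *\<^sub>R u}"
      then obtain m1 l1 m2 l2 where h: "m1\<in>M" "lmod x \<le> lmod m1 + l1 *\<^sub>R u" "m2\<in>M" "lmod z \<le> lmod m2 + l2 *\<^sub>R u" by auto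
      have "lmod (x + z) \<le> lmod x + lmod z" by (rule lmod_triangle)
      also have "\<dots> \<le> (lmod m1 + l1 *\<^sub>R u) + (lmod m2 + l2 *\<^sub>R u)" using h by (intro add_mono)
      also have "\<dots> = lmod (lmod m1 + lmod m2) + (l1 + l2) *\<^sub>R u"
        by (simp add: lmod_pos lmod_nonneg add_nonneg_nonneg algebra_simps)
      finally have "lmod (x + z) \<le> lmod (lmod m1 + lmod m2) + (l1 + l2) *\<^sub>R u" .
      moreover have "lmod m1 + lmod m2 \<in> M" using h Madd Mlmod by blast
      ultimately show "x + z \<in> {w. \<exists>m\<in>M. \<exists>l. lmod w \<le> lmod m + l *\<^sub>R u}" by blast
    next
      fix x c assume "x \<in> {w. \<exists>m\<in>M. \<exists>l. lmod w \<le> lmod m + l *\<^sub>R u}"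
      then obtain m l where h: "m\<in>M" "lmod x \<le> lmod m + l *\<^sub>R u" by auto
      have "\<bar>c\<bar> *\<^sub>R lmod x \<le> \<bar>c\<bar> *\<^sub>R (lmod m + l *\<^sub>R u)" using h by (intro scaleR_left_mono) auto
      then have "lmod (c *\<^sub>R x) \<le> lmod (c *\<^sub>R m) + (\<bar>c\<bar> * l) *\<^sub>R u"
        by (simp add: lmod_scale scaleR_add_right)
      moreover have "c *\<^sub>R m \<in> M" using Msc h by blast
      ultimately show "c *\<^sub>R x \<in> {w. \<exists>m\<in>M. \<exists>l. lmod w \<le> lmod m + l *\<^sub>R u}" by blast
    next
      fix x z assume "z \<in> {w. \<exists>m\<in>M. \<exists>l. lmod w \<le> lmod m + l *\<^sub>R u}" "lmod x \<le> lmod z"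
      then show "x \<in> {w. \<exists>m\<in>M. \<exists>l. lmod w \<le> lmod m + l *\<^sub>R u}" by (auto intro: order_trans)
    qed
    moreover have "M \<subseteq> Mu" unfolding Mu_def by (auto intro!: exI[of _ 0])
    moreover have "u \<in> Mu" unfolding Mu_def using M0 lmod_pos[OF u0] lmod_pos[of "0::'a"]
      by (intro CollectI bexI[of _ 0] exI[of _ 1]) auto
    ultimately have "e \<in> Mu" using Mmax[of Mu] uM My unfolding A_def by blast
    then obtain m l where h: "m \<in> M" "e \<le> lmod m + l *\<^sub>R u" unfolding Mu_def using lmod_pos[OF e0] by auto
    have "l *\<^sub>R u \<le> \<bar>l\<bar> *\<^sub>R u" using u0 by (intro scaleR_right_mono) auto
    then have "e \<le> lmod m + \<bar>l\<bar> *\<^sub>R u" using h(2) by (meson add_left_mono order_trans)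
    then show ?thesis using h(1) by (intro bexI[of _ m] exI[of _ "\<bar>l\<bar>"]) auto
  qed
  have prime: "sup z 0 \<in> M \<or> sup (-z) 0 \<in> M" for z
  proof (rule ccontr)
    assume "\<not> ?thesis"
    then have a: "sup z 0 \<notin> M" and b: "sup (-z) 0 \<notin> M" by auto
    obtain m1 l1 where h1: "m1 \<in> M" "l1 \<ge> 0" "e \<le> lmod m1 + l1 *\<^sub>R sup z 0" using gen[OF _ a] by auto
    obtain m2 l2 where h2: "m2 \<in> M" "l2 \<ge> 0" "e \<le> lmod m2 + l2 *\<^sub>R sup (-z) 0" using gen[OF _ b] by auto
    define P where "P = lmod m1 + lmod m2"
    define \<mu> where "\<mu> = max l1 l2"
    have PM: "P \<in> M" unfolding P_def using h1 h2 Madd Mlmod by blast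
    have mu0: "0 \<le> \<mu>" using h1 unfolding \<mu>_def by simp
    have "lmod m1 + l1 *\<^sub>R sup z 0 \<le> P + \<mu> *\<^sub>R sup z 0" unfolding P_def \<mu>_def
      by (intro add_mono scaleR_right_mono) (auto simp: lmod_nonneg)
    then have e1: "e \<le> P + \<mu> *\<^sub>R sup z 0" by (rule order_trans[OF h1(3)])
    have "lmod m2 + l2 *\<^sub>R sup (-z) 0 \<le> P + \<mu> *\<^sub>R sup (-z) 0" unfolding P_def \<mu>_def
      by (intro add_mono scaleR_right_mono) (auto simp: lmod_nonneg)
    then have e2: "e \<le> P + \<mu> *\<^sub>R sup (-z) 0" by (rule order_trans[OF h2(3)])
    have "e \<le> inf (P + \<mu> *\<^sub>R sup z 0) (P + \<mu> *\<^sub>R sup (-z) 0)" using e1 e2 by simp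
    also have "\<dots> = P + \<mu> *\<^sub>R inf (sup z 0) (sup (-z) 0)" by (simp add: inf_add_left scale_inf[OF mu0])
    also have "\<dots> = P" by (simp add: inf_pos_neg)
    finally have "e \<le> P" .
    then have "e \<in> M" using Mpos[OF e0 _ PM] by simp
    then show False using Me by simp
  qed
  have Mpr: "sup (e - y) 0 \<in> M" using Msol[OF My] lmod_pos pos_le_lmod lmod_nonneg by (metis sup_ge2)
  obtain \<phi> where phi: "\<phi> \<in> Kset" "\<forall>z. sup (e - z) 0 \<in> M \<longrightarrow> 1 \<le> \<phi> z"
    using hom_from_prime[OF Mid Me prime] by blast
  have "\<phi> y \<le> 1" using K_mono[OF phi(1) ye] K_e[OF phi(1)] by simp
  then show ?thesis using phi Mpr by force
qed

end


context amu
begin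

definition Ptop :: "('a \<Rightarrow> real) topology" where
  "Ptop = product_topology (\<lambda>x. subtopology euclideanreal {-norm x..norm x}) UNIV"

definition Ktop :: "('a \<Rightarrow> real) topology" where
  "Ktop = subtopology Ptop Kset"

definition Phi :: "'a \<Rightarrow> ('a \<Rightarrow> real) \<Rightarrow> real" where
  "Phi x = (\<lambda>\<phi>. if \<phi> \<in> Kset then \<phi> x else 0)"

lemma Ptop_compact: "compact_space Ptop"
  unfolding Ptop_def
  using compact_space_product_topology compact_space_subtopology compactin_euclidean_iff compact_Icc by blast

lemma Ptop_Hausdorff: "Hausdorff_space Ptop"
  unfolding Ptop_def
  using Hausdorff_space_euclidean Hausdorff_space_product_topology Hausdorff_space_subtopology by blast

lemma topP: "topspace Ptop = {\<phi>. \<forall>x. \<phi> x \<in> {-norm x..norm x}}"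
  unfolding Ptop_def by (auto simp: PiE_def Pi_def)

lemma Kset_sub: "Kset \<subseteq> topspace Ptop"
proof
  fix \<phi> assume "\<phi> \<in> Kset"
  then have "\<bar>\<phi> x\<bar> \<le> norm x" for x by (rule K_bound)
  then show "\<phi> \<in> topspace Ptop" unfolding topP by (simp add: abs_le_iff) (meson minus_le_iff)
qed

lemma topK: "topspace Ktop = Kset"
  unfolding Ktop_def using Kset_sub by auto

lemma proj_cont: "continuous_map Ptop euclideanreal (\<lambda>\<phi>. \<phi> x)"
proof -
  have "continuous_map Ptop (subtopology euclideanreal {-norm x..norm x}) (\<lambda>\<phi>. \<phi> x)"
    unfolding Ptop_def by (rule continuous_map_product_projection) simp
  then show ?thesis by (simp add: continuous_map_in_subtopology)
qed

lemma Kset_closed: "closedin Ptop Kset"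
proof -
  define A1 where "A1 = (\<Inter>x\<in>UNIV. \<Inter>z\<in>UNIV. {\<phi>\<in>topspace Ptop. \<phi> (x+z) = \<phi> x + \<phi> z})"
  define A2 where "A2 = (\<Inter>c\<in>UNIV. \<Inter>x\<in>UNIV. {\<phi>\<in>topspace Ptop. \<phi> (c *\<^sub>R x) = c * \<phi> x})"
  define A3 where "A3 = (\<Inter>x\<in>UNIV. \<Inter>z\<in>UNIV. {\<phi>\<in>topspace Ptop. \<phi> (sup x z) = max (\<phi> x) (\<phi> z)})"
  define A4 where "A4 = {\<phi>\<in>topspace Ptop. \<phi> e = 1}"
  have "closedin Ptop A1" unfolding A1_def
    by (intro closedin_INT closedin_continuous_maps_eq[OF Hausdorff_space_euclidean] proj_cont continuous_map_add) auto
  moreover have "closedin Ptop A2" unfolding A2_def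
    by (intro closedin_INT closedin_continuous_maps_eq[OF Hausdorff_space_euclidean] proj_cont continuous_map_real_mult continuous_map_const[THEN iffD2]) auto
  moreover have "closedin Ptop A3" unfolding A3_def
    by (intro closedin_INT closedin_continuous_maps_eq[OF Hausdorff_space_euclidean] proj_cont continuous_map_real_max) auto
  moreover have "closedin Ptop A4" unfolding A4_def
    by (intro closedin_continuous_maps_eq[OF Hausdorff_space_euclidean] proj_cont continuous_map_const[THEN iffD2]) auto
  moreover have "Kset = A1 \<inter> A2 \<inter> A3 \<inter> A4"
    using Kset_sub unfolding A1_def A2_def A3_def A4_def Kset_def by auto
  ultimately show ?thesis by (simp add: closedin_Int)
qed

lemma Ktop_compact: "compact_space Ktop"
  unfolding Ktop_def by (rule compact_space_subtopology[OF closedin_compact_space[OF Ptop_compact Kset_closed]])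

lemma Ktop_Hausdorff: "Hausdorff_space Ktop"
  unfolding Ktop_def by (rule Hausdorff_space_subtopology[OF Ptop_Hausdorff])

lemma Kcont: "continuous_map Ktop euclideanreal (\<lambda>\<phi>. \<phi> x)"
  unfolding Ktop_def by (rule continuous_map_from_subtopology[OF proj_cont])

lemma Phi_CK: "Phi x \<in> CK Ktop"
  unfolding CK_def
proof (intro CollectI conjI allI impI)
  show "continuous_map Ktop euclideanreal (Phi x)"
    by (rule continuous_map_eq[OF Kcont[of x]]) (simp add: topK Phi_def)
  fix t assume "t \<notin> topspace Ktop" then show "Phi x t = 0" by (simp add: topK Phi_def)
qed

lemma attain: "\<exists>\<phi>\<in>Kset. \<bar>\<phi> x\<bar> = norm x"
proof (cases "x = 0")
  case True
  obtain \<phi> where "\<phi> \<in> Kset" using hom_exists[OF e0 en] by blast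
  then show ?thesis using True K_zero by auto
next
  case False
  define y where "y = (1/norm x) *\<^sub>R lmod x"
  have y0: "0 \<le> y" unfolding y_def by (intro scaleR_nonneg_nonneg lmod_nonneg) simp
  have yn: "norm y = 1" unfolding y_def using False bl_norm_lmod[OF BL, of x] by simp
  obtain \<phi> where \<phi>: "\<phi> \<in> Kset" "\<phi> y = 1" using hom_exists[OF y0 yn] by blast
  have "\<phi> y = (1/norm x) * \<bar>\<phi> x\<bar>" unfolding y_def using \<phi>(1) by (simp add: K_scale K_lmod)
  then have "\<bar>\<phi> x\<bar> = norm x" using \<phi>(2) False by (simp add: field_simps)
  then show ?thesis using \<phi>(1) by blast
qed

lemma Kset_ne: "Kset \<noteq> {}" using attain by blast

lemma Phi_norm: "CK_norm Ktop (Phi x) = norm x"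
proof -
  have "(SUP t\<in>Kset. \<bar>Phi x t\<bar>) = norm x"
  proof (rule cSup_eq_maximum)
    show "norm x \<in> (\<lambda>t. \<bar>Phi x t\<bar>) ` Kset" using attain[of x] by (force simp: Phi_def)
    show "\<And>y. y \<in> (\<lambda>t. \<bar>Phi x t\<bar>) ` Kset \<Longrightarrow> y \<le> norm x" using K_bound by (auto simp: Phi_def)
  qed
  then show ?thesis unfolding CK_norm_def using topK Kset_ne by simp
qed

lemma Phi_inj: "inj Phi"
proof (rule injI)
  fix x z assume h: "Phi x = Phi z"
  obtain \<phi> where \<phi>: "\<phi> \<in> Kset" "\<bar>\<phi> (x - z)\<bar> = norm (x - z)" using attain by blast
  have "\<phi> x = \<phi> z" using fun_cong[OF h, of \<phi>] \<phi>(1) by (simp add: Phi_def)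
  then have "norm (x - z) = 0" using \<phi> by (simp add: K_diff)
  then show "x = z" by simp
qed

end


context amu
begin

lemma fin_max: "finite T \<Longrightarrow> T \<noteq> {} \<Longrightarrow> \<exists>x. \<forall>\<phi>\<in>Kset. \<phi> x = Max ((\<lambda>t. \<phi> (H t)) ` T)"
proof (induction T rule: finite_ne_induct)
  case (singleton t) then show ?case by (intro exI[of _ "H t"]) simp
next
  case (insert t T)
  then obtain x where x: "\<forall>\<phi>\<in>Kset. \<phi> x = Max ((\<lambda>t. \<phi> (H t)) ` T)" by blast
  show ?case
    by (rule exI[of _ "sup (H t) x"]) (use x insert in \<open>simp add: K_sup\<close>)
qed

lemma fin_min: "finite T \<Longrightarrow> T \<noteq> {} \<Longrightarrow> \<exists>x. \<forall>\<phi>\<in>Kset. \<phi> x = Min ((\<lambda>t. \<phi> (H t)) ` T)"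
proof (induction T rule: finite_ne_induct)
  case (singleton t) then show ?case by (intro exI[of _ "H t"]) simp
next
  case (insert t T)
  then obtain x where x: "\<forall>\<phi>\<in>Kset. \<phi> x = Min ((\<lambda>t. \<phi> (H t)) ` T)" by blast
  show ?case
    by (rule exI[of _ "inf (H t) x"]) (use x insert in \<open>simp add: K_inf\<close>)
qed

lemma interp:
  assumes "s \<in> Kset" "t \<in> Kset"
  shows "\<exists>x. s x = a \<and> t x = (if s = t then a else b)"
proof (cases "s = t")
  case True
  then show ?thesis using assms by (intro exI[of _ "a *\<^sub>R e"]) (simp add: K_scale K_e)
next
  case False
  then obtain z where z: "s z \<noteq> t z" by blast
  define \<alpha> where "\<alpha> = (a - b) / (s z - t z)"
  define \<beta> where "\<beta> = a - \<alpha> * s z"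
  have "s (\<alpha> *\<^sub>R z + \<beta> *\<^sub>R e) = a" using assms by (simp add: K_add K_scale K_e \<beta>_def)
  moreover have "t (\<alpha> *\<^sub>R z + \<beta> *\<^sub>R e) = b"
  proof -
    have "t (\<alpha> *\<^sub>R z + \<beta> *\<^sub>R e) = \<alpha> * t z + \<beta>" using assms by (simp add: K_add K_scale K_e)
    also have "\<dots> = \<alpha> * (t z - s z) + a" unfolding \<beta>_def by (simp add: algebra_simps)
    also have "\<alpha> * (t z - s z) = b - a" using z unfolding \<alpha>_def by (simp add: field_simps)
    finally show ?thesis by simp
  qed
  ultimately have "s (\<alpha> *\<^sub>R z + \<beta> *\<^sub>R e) = a \<and> t (\<alpha> *\<^sub>R z + \<beta> *\<^sub>R e) = (if s = t then a else b)"
    using False by simp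
  then show ?thesis by (rule exI)
qed

lemma cover_finite:
  assumes opn: "\<And>t. t \<in> Kset \<Longrightarrow> openin Ktop (U t)" and cov: "\<And>t. t \<in> Kset \<Longrightarrow> t \<in> U t"
  shows "\<exists>T. finite T \<and> T \<subseteq> Kset \<and> T \<noteq> {} \<and> Kset \<subseteq> (\<Union>t\<in>T. U t)"
proof -
  have "\<forall>V\<in>U ` Kset. openin Ktop V" using opn by blast
  moreover have "topspace Ktop \<subseteq> \<Union>(U ` Kset)" using cov topK by blast
  ultimately obtain F where F: "finite F" "F \<subseteq> U ` Kset" "topspace Ktop \<subseteq> \<Union>F"
    using Ktop_compact unfolding compact_space_alt by meson
  obtain T where T: "T \<subseteq> Kset" "finite T" "F = U ` T" using finite_subset_image[OF F(1,2)] by blast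
  have "Kset \<subseteq> (\<Union>t\<in>T. U t)" using F(3) T(3) topK by simp
  moreover have "T \<noteq> {}" using calculation Kset_ne by blast
  ultimately show ?thesis using T by blast
qed

lemma approx:
  assumes g: "g \<in> CK Ktop" and \<epsilon>: "0 < \<epsilon>"
  shows "\<exists>x. \<forall>\<phi>\<in>Kset. \<bar>\<phi> x - g \<phi>\<bar> < \<epsilon>"
proof -
  have gc: "continuous_map Ktop euclideanreal g" using g by (simp add: CK_def)
  have opn_gt: "openin Ktop {\<phi> \<in> topspace Ktop. 0 < \<phi> x - g \<phi> + \<epsilon>}" for x
  proof -
    have "continuous_map Ktop euclideanreal (\<lambda>\<phi>. \<phi> x - g \<phi> + \<epsilon>)"
      by (intro continuous_map_add continuous_map_diff Kcont gc) simp
    from openin_continuous_map_preimage[OF this, of "{0<..}"] show ?thesis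
      by (simp add: open_openin[symmetric])
  qed
  have opn_lt: "openin Ktop {\<phi> \<in> topspace Ktop. 0 < g \<phi> + \<epsilon> - \<phi> x}" for x
  proof -
    have "continuous_map Ktop euclideanreal (\<lambda>\<phi>. g \<phi> + \<epsilon> - \<phi> x)"
      by (intro continuous_map_add continuous_map_diff Kcont gc) simp
    from openin_continuous_map_preimage[OF this, of "{0<..}"] show ?thesis
      by (simp add: open_openin[symmetric])
  qed
  have step1: "\<exists>x. s x = g s \<and> (\<forall>\<phi>\<in>Kset. g \<phi> - \<epsilon> < \<phi> x)" if s: "s \<in> Kset" for s
  proof -
    have "\<forall>t\<in>Kset. \<exists>x. s x = g s \<and> t x = g t"
      using interp[OF s, of _ "g s" "g _"] by (metis (full_types))
    then obtain h where h: "\<And>t. t \<in> Kset \<Longrightarrow> s (h t) = g s \<and> t (h t) = g t" by metis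
    define U where "U t = {\<phi> \<in> topspace Ktop. 0 < \<phi> (h t) - g \<phi> + \<epsilon>}" for t
    have "\<exists>T. finite T \<and> T \<subseteq> Kset \<and> T \<noteq> {} \<and> Kset \<subseteq> (\<Union>t\<in>T. U t)"
      by (rule cover_finite) (use opn_gt h \<epsilon> topK in \<open>auto simp: U_def\<close>)
    then obtain T where T: "finite T" "T \<subseteq> Kset" "T \<noteq> {}" "Kset \<subseteq> (\<Union>t\<in>T. U t)" by blast
    obtain x where x: "\<forall>\<phi>\<in>Kset. \<phi> x = Max ((\<lambda>t. \<phi> (h t)) ` T)" using fin_max[OF T(1,3)] by blast
    have "s x = g s"
    proof -
      have all: "\<forall>t\<in>T. s (h t) = g s" using h T(2) by blast
      have eq: "(\<lambda>t. s (h t)) ` T = {g s}" using all T(3) by force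
      have "s x = Max ((\<lambda>t. s (h t)) ` T)" using x s by blast
      also have "\<dots> = g s" unfolding eq by simp
      finally show ?thesis .
    qed
    moreover have "g \<phi> - \<epsilon> < \<phi> x" if \<phi>K: "\<phi> \<in> Kset" for \<phi>
    proof -
      obtain t where t: "t \<in> T" "\<phi> \<in> U t" using T(4) \<phi>K by blast
      then have "g \<phi> - \<epsilon> < \<phi> (h t)" unfolding U_def by simp
      also have "\<phi> (h t) \<le> Max ((\<lambda>t. \<phi> (h t)) ` T)" using T(1) t(1) by (intro Max_ge) auto
      finally show ?thesis using x \<phi>K by simp
    qed
    ultimately show ?thesis by blast
  qed
  then obtain h where h: "\<And>s. s \<in> Kset \<Longrightarrow> s (h s) = g s \<and> (\<forall>\<phi>\<in>Kset. g \<phi> - \<epsilon> < \<phi> (h s))" by metis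
  define V where "V s = {\<phi> \<in> topspace Ktop. 0 < g \<phi> + \<epsilon> - \<phi> (h s)}" for s
  have "\<exists>T. finite T \<and> T \<subseteq> Kset \<and> T \<noteq> {} \<and> Kset \<subseteq> (\<Union>t\<in>T. V t)"
    by (rule cover_finite) (use opn_lt h \<epsilon> topK in \<open>auto simp: V_def\<close>)
  then obtain T where T: "finite T" "T \<subseteq> Kset" "T \<noteq> {}" "Kset \<subseteq> (\<Union>t\<in>T. V t)" by blast
  obtain x where x: "\<forall>\<phi>\<in>Kset. \<phi> x = Min ((\<lambda>t. \<phi> (h t)) ` T)" using fin_min[OF T(1,3)] by blast
  have "\<bar>\<phi> x - g \<phi>\<bar> < \<epsilon>" if \<phi>K: "\<phi> \<in> Kset" for \<phi>
  proof -
    obtain t where t: "t \<in> T" "\<phi> \<in> V t" using T(4) \<phi>K by blast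
    have "Min ((\<lambda>t. \<phi> (h t)) ` T) \<le> \<phi> (h t)" using T(1) t(1) by (intro Min_le) auto
    also have "\<phi> (h t) < g \<phi> + \<epsilon>" using t(2) unfolding V_def by simp
    finally have a: "\<phi> x < g \<phi> + \<epsilon>" using x \<phi>K by simp
    have "g \<phi> - \<epsilon> < Min ((\<lambda>t. \<phi> (h t)) ` T)"
    proof -
      have "\<forall>t\<in>T. g \<phi> - \<epsilon> < \<phi> (h t)" using h T(2) \<phi>K by blast
      then show ?thesis using T(1,3) by (subst Min_gr_iff) auto
    qed
    then have b: "g \<phi> - \<epsilon> < \<phi> x" using x \<phi>K by simp
    show ?thesis using a b by (simp add: abs_less_iff)
  qed
  then show ?thesis by blast
qed

lemma K_bl: "\<phi> \<in> Kset \<Longrightarrow> bounded_linear \<phi>"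
  by (rule bounded_linear_intro[where K=1]) (auto simp: K_add K_scale K_bound)

lemma Phi_surj:
  assumes g: "g \<in> CK Ktop"
  shows "\<exists>x. Phi x = g"
proof -
  have "\<forall>n::nat. \<exists>x. \<forall>\<phi>\<in>Kset. \<bar>\<phi> x - g \<phi>\<bar> < inverse (real (Suc n))"
    using approx[OF g] by simp
  then obtain xs where xs: "\<And>n \<phi>. \<phi> \<in> Kset \<Longrightarrow> \<bar>\<phi> (xs n) - g \<phi>\<bar> < inverse (real (Suc n))" by metis
  have Cy: "Cauchy xs"
  proof (rule CauchyI)
    fix \<epsilon> :: real assume \<epsilon>: "0 < \<epsilon>"
    obtain M :: nat where M: "2 / \<epsilon> < real M" using reals_Archimedean2 by blast
    have "\<forall>m\<ge>M. \<forall>n\<ge>M. norm (xs m - xs n) < \<epsilon>"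
    proof (intro allI impI)
      fix m n assume mn: "M \<le> m" "M \<le> n"
      obtain \<phi> where \<phi>: "\<phi> \<in> Kset" "\<bar>\<phi> (xs m - xs n)\<bar> = norm (xs m - xs n)" using attain by blast
      have "inverse (real (Suc m)) \<le> inverse (real (Suc M))" using mn by (intro le_imp_inverse_le) auto
      moreover have "inverse (real (Suc n)) \<le> inverse (real (Suc M))" using mn by (intro le_imp_inverse_le) auto
      moreover have "2 * inverse (real (Suc M)) < \<epsilon>"
      proof -
        have "2 / \<epsilon> < real (Suc M)" using M by simp
        then show ?thesis using \<epsilon> by (simp add: field_simps)
      qed
      moreover have "norm (xs m - xs n) \<le> \<bar>\<phi> (xs m) - g \<phi>\<bar> + \<bar>\<phi> (xs n) - g \<phi>\<bar>"
        using \<phi> by (simp add: K_diff)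
      ultimately show "norm (xs m - xs n) < \<epsilon>" using xs[OF \<phi>(1), of m] xs[OF \<phi>(1), of n] by linarith
    qed
    then show "\<exists>M. \<forall>m\<ge>M. \<forall>n\<ge>M. norm (xs m - xs n) < \<epsilon>" by blast
  qed
  then have lim: "xs \<longlonglongrightarrow> lim xs" using Cauchy_convergent_iff convergent_LIMSEQ_iff by blast
  define x where "x = lim xs"
  have val: "\<phi> x = g \<phi>" if \<phi>: "\<phi> \<in> Kset" for \<phi>
  proof -
    have t1: "(\<lambda>n. \<phi> (xs n)) \<longlonglongrightarrow> \<phi> x" unfolding x_def using bounded_linear.tendsto[OF K_bl[OF \<phi>] lim] .
    have "(\<lambda>n. \<phi> (xs n) - g \<phi>) \<longlonglongrightarrow> 0"
    proof (rule Lim_null_comparison[OF _ LIMSEQ_inverse_real_of_nat])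
      show "\<forall>\<^sub>F n in sequentially. norm (\<phi> (xs n) - g \<phi>) \<le> inverse (real (Suc n))"
        using xs[OF \<phi>] by (simp add: less_imp_le)
    qed
    from tendsto_add[OF this tendsto_const[of "g \<phi>"]] have t2: "(\<lambda>n. \<phi> (xs n)) \<longlonglongrightarrow> g \<phi>" by simp
    show ?thesis using LIMSEQ_unique[OF t1 t2] .
  qed
  have "Phi x = g"
  proof
    fix \<phi>
    show "Phi x \<phi> = g \<phi>"
    proof (cases "\<phi> \<in> Kset")
      case True then show ?thesis using val by (simp add: Phi_def)
    next
      case False then show ?thesis using g topK by (simp add: Phi_def CK_def)
    qed
  qed
  then show ?thesis by blast
qed

lemma Phi_iso: "lattice_isometry_onto_CK Phi Ktop"
  unfolding lattice_isometry_onto_CK_def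
proof (intro conjI allI)
  have "range Phi = CK Ktop"
  proof
    show "range Phi \<subseteq> CK Ktop" using Phi_CK by blast
    show "CK Ktop \<subseteq> range Phi"
    proof
      fix g assume "g \<in> CK Ktop"
      then obtain x where "Phi x = g" using Phi_surj by blast
      then show "g \<in> range Phi" by (rule range_eqI[OF sym])
    qed
  qed
  then show "bij_betw Phi UNIV (CK Ktop)" unfolding bij_betw_def using Phi_inj by simp
  fix x y :: 'a and t :: "'a \<Rightarrow> real" and c :: real
  show "Phi (x + y) t = Phi x t + Phi y t" by (simp add: Phi_def K_add)
  show "Phi (c *\<^sub>R x) t = c * Phi x t" by (simp add: Phi_def K_scale)
  show "Phi (sup x y) t = max (Phi x t) (Phi y t)" by (simp add: Phi_def K_sup)
  show "Phi (inf x y) t = min (Phi x t) (Phi y t)" by (simp add: Phi_def K_inf)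
next
  fix x :: 'a
  show "CK_norm Ktop (Phi x) = norm x" by (rule Phi_norm)
qed

end

theorem mainTheorem16:
  assumes "AM_space TYPE('a::{banach,ordered_real_vector,lattice})"
    and "separable_type TYPE('a)"
    and "\<forall>f::'a \<Rightarrow> real. positive_dual f \<longrightarrow> attains_norm f"
  shows "\<exists>(K::('a \<Rightarrow> real) topology) (\<Phi>::'a \<Rightarrow> ('a \<Rightarrow> real) \<Rightarrow> real).
           compact_space K \<and> Hausdorff_space K \<and> lattice_isometry_onto_CK \<Phi> K"
proof -
  obtain e :: 'a where e: "0 \<le> e" "norm e = 1" "\<forall>y. lmod y \<le> norm y *\<^sub>R e"
    using unit_exists[OF assms] by blast
  have BL: "banach_lattice TYPE('a)" using assms(1) by (simp add: AM_space_def)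
  interpret amu e using BL e by unfold_locales auto
  show ?thesis using Ktop_compact Ktop_Hausdorff Phi_iso by blast
qed


end
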